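(* Let $(S,d)$ be a metric space and $\bullet\in\{\mathrm{FM},\mathrm{BL}\}$. If $f\in B^S_\bullet$ satisfies $|f|=\mathbf{1}$, then $f\in\operatorname{ext}(B^S_\bullet)$. In particular, if $\bullet=\mathrm{BL}$, then $f=\pm\mathbf{1}$.
   Context: $\mathrm{BL}(S)$ is the space of bounded real-valued Lipschitz functions on $S$, $|f|_L=\sup_{x\neq y}|f(x)-f(y)|/d(x,y)$, $\|f\|_{\mathrm{BL}}=\|f\|_\infty+|f|_L$, $\|f\|_{\mathrm{FM}}=\max(\|f\|_\infty,|f|_L)$, $B^S_\bullet=\{f\in\mathrm{BL}(S):\|f\|_\bullet\le1\}$, $\operatorname{ext}$ denotes the set of extreme points, and $\mathbf{1}$ is the constant function $1$. *)

theory Defs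
  imports "HOL-Analysis.Analysis"
begin

definition BL_space :: "('a::metric_space \<Rightarrow> real) set" where
  "BL_space = {f. bounded (range f) \<and> (\<exists>C. C-lipschitz_on UNIV f)}"

definition sup_norm :: "('a::metric_space \<Rightarrow> real) \<Rightarrow> real" where
  "sup_norm f = (SUP x. \<bar>f x\<bar>)"

text \<open>Lipschitz seminorm; the 0 covers the degenerate one-point space.\<close>
definition lip_norm :: "('a::metric_space \<Rightarrow> real) \<Rightarrow> real" where
  "lip_norm f = Sup (insert 0 {\<bar>f x - f y\<bar> / dist x y | x y. x \<noteq> y})"

definition BL_norm :: "('a::metric_space \<Rightarrow> real) \<Rightarrow> real" where
  "BL_norm f = sup_norm f + lip_norm f"

definition FM_norm :: "('a::metric_space \<Rightarrow> real) \<Rightarrow> real" where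
  "FM_norm f = max (sup_norm f) (lip_norm f)"

datatype norm_kind = FM | BL

fun the_norm :: "norm_kind \<Rightarrow> ('a::metric_space \<Rightarrow> real) \<Rightarrow> real" where
  "the_norm FM f = FM_norm f"
| "the_norm BL f = BL_norm f"

definition unit_ball :: "norm_kind \<Rightarrow> ('a::metric_space \<Rightarrow> real) set" where
  "unit_ball k = {f \<in> BL_space. the_norm k f \<le> 1}"

definition ext :: "('a \<Rightarrow> real) set \<Rightarrow> ('a \<Rightarrow> real) set" where
  "ext K = {f \<in> K. \<forall>g\<in>K. \<forall>h\<in>K. \<forall>t::real. 0 < t \<and> t < 1 \<and>
              f = (\<lambda>x. t * g x + (1 - t) * h x) \<longrightarrow> g = h}"

end

theory Submission
  imports Defs
begin

lemma sup_le: assumes "f \<in> BL_space" shows "\<bar>f x\<bar> \<le> sup_norm f"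
proof -
  from assms obtain a where a: "\<forall>y\<in>range f. norm y \<le> a"
    unfolding BL_space_def bounded_iff by auto
  have "bdd_above (range (\<lambda>x. \<bar>f x\<bar>))"
    using a by (auto intro!: bdd_aboveI2[where M=a])
  then show ?thesis unfolding sup_norm_def by (rule cSUP_upper[OF UNIV_I])
qed

lemma lip_bdd: assumes "f \<in> BL_space"
  shows "bdd_above (insert 0 {\<bar>f x - f y\<bar> / dist x y | x y. x \<noteq> y})"
proof -
  from assms obtain C where C: "C-lipschitz_on UNIV f" unfolding BL_space_def by auto
  have "\<bar>f x - f y\<bar> / dist x y \<le> C" if "x \<noteq> y" for x y
  proof -
    have "dist (f x) (f y) \<le> C * dist x y" using lipschitz_onD[OF C] by auto
    moreover have "dist x y > 0" using that by simp
    ultimately show ?thesis by (simp add: dist_real_def pos_divide_le_eq)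
  qed
  then show ?thesis by (intro bdd_aboveI[where M="max 0 C"]) fastforce
qed

lemma lip_ge0: assumes "f \<in> BL_space" shows "0 \<le> lip_norm f"
  unfolding lip_norm_def by (rule cSup_upper[OF _ lip_bdd[OF assms]]) simp

lemma lip_ge: assumes "f \<in> BL_space" "x \<noteq> y"
  shows "\<bar>f x - f y\<bar> / dist x y \<le> lip_norm f"
  unfolding lip_norm_def by (rule cSup_upper[OF _ lip_bdd[OF assms(1)]]) (use assms(2) in auto)

lemma ball_le1: assumes "g \<in> unit_ball k" shows "\<bar>g x\<bar> \<le> 1"
proof -
  have g: "g \<in> BL_space" "the_norm k g \<le> 1" using assms unfolding unit_ball_def by auto
  have "sup_norm g \<le> the_norm k g"
    using lip_ge0[OF g(1)] by (cases k) (auto simp: FM_norm_def BL_norm_def)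
  then show ?thesis using sup_le[OF g(1), of x] g(2) by linarith
qed

theorem lemma3p1:
  fixes k :: norm_kind and f :: "'a::metric_space \<Rightarrow> real"
  assumes "f \<in> unit_ball k"
    and "\<forall>x. \<bar>f x\<bar> = 1"
  shows "f \<in> ext (unit_ball k) \<and> (k = BL \<longrightarrow> f = (\<lambda>_. 1) \<or> f = (\<lambda>_. -1))"
proof
  show "f \<in> ext (unit_ball k)"
    unfolding ext_def
  proof (intro CollectI conjI ballI allI impI assms(1))
    fix g h t assume gh: "g \<in> unit_ball k" "h \<in> unit_ball k"
      and t: "0 < t \<and> t < 1 \<and> f = (\<lambda>x. t * g x + (1 - t) * h x)"
    show "g = h"
    proof
      fix x
      have fx: "f x = t * g x + (1 - t) * h x" using t by simp
      have g1: "\<bar>g x\<bar> \<le> 1" and h1: "\<bar>h x\<bar> \<le> 1" using ball_le1 gh by auto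
      have a: "\<bar>f x\<bar> = 1" using assms(2) by simp
      have t0: "0 < t" "t < 1" using t by auto
      show "g x = h x"
      proof (cases "f x = 1")
        case True
        have "t * g x \<le> t" "(1 - t) * h x \<le> 1 - t" using g1 h1 t0 by (auto simp: abs_le_iff)
        have "t * (1 - g x) + (1 - t) * (1 - h x) = 0" using fx True by (simp add: algebra_simps)
        moreover have "t * (1 - g x) \<ge> 0" "(1 - t) * (1 - h x) \<ge> 0" using g1 h1 t0 by (auto simp: abs_le_iff)
        ultimately have "t * (1 - g x) = 0" "(1 - t) * (1 - h x) = 0" by linarith+
        then show ?thesis using t0 by simp
      next
        case False
        then have m: "f x = -1" using a by (auto simp: abs_if split: if_splits)
        have "t * (1 + g x) + (1 - t) * (1 + h x) = 0" using fx m by (simp add: algebra_simps)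
        moreover have "t * (1 + g x) \<ge> 0" "(1 - t) * (1 + h x) \<ge> 0" using g1 h1 t0 by (auto simp: abs_le_iff)
        ultimately have "t * (1 + g x) = 0" "(1 - t) * (1 + h x) = 0" by linarith+
        then show ?thesis using t0 by simp
      qed
    qed
  qed
  show "k = BL \<longrightarrow> f = (\<lambda>_. 1) \<or> f = (\<lambda>_. -1)"
  proof
    assume k: "k = BL"
    have fB: "f \<in> BL_space" "BL_norm f \<le> 1" using assms(1) k unfolding unit_ball_def by auto
    have "sup_norm f = 1" unfolding sup_norm_def using assms(2) by simp
    then have l0: "lip_norm f \<le> 0" using fB(2) by (simp add: BL_norm_def)
    have fc: "\<And>x y. f x = f y"
    proof (rule ccontr)
      fix x y assume ne: "f x \<noteq> f y"
      then have "x \<noteq> y" by auto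
      have "\<bar>f x - f y\<bar> = 2" using ne assms(2)
        by (smt (verit) abs_if)
      moreover have "dist x y > 0" using \<open>x \<noteq> y\<close> by simp
      ultimately have "\<bar>f x - f y\<bar> / dist x y > 0" by simp
      with lip_ge[OF fB(1) \<open>x \<noteq> y\<close>] l0 show False by linarith
    qed
    then show "f = (\<lambda>_. 1) \<or> f = (\<lambda>_. -1)"
    proof (cases "f undefined = 1")
      case True
      then have "f = (\<lambda>_. 1)" using fc by (metis HOL.ext)
      then show ?thesis by simp
    next
      case False
      then have "f undefined = -1" using assms(2) by (metis abs_if minus_minus)
      then have "f = (\<lambda>_. -1)" using fc by (metis HOL.ext)
      then show ?thesis by simp
    qed
  qed
qed

end
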